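(* Let $p\geq 2$ and let $T$ be the (geometric realization of the) regular rooted tree in which the root has valence $p$ and every other vertex has valence $p+1$, equipped with its usual topology. Let $\mathcal{D}_T$ be the embedded wire diffeology on $T$. Then the D-topology of the diffeological space $(T,\mathcal{D}_T)$ coincides with the usual topology of $T$.
   Context: Fix a finite alphabet $A$ with $|A|=p\geq 2$. The vertices of $T$ are the finite words over $A$ (the root is the empty word); two vertices are joined by an edge iff they have the form $a_1\dots a_n$ and $a_1\dots a_na_{n+1}$. As a topological space, $T$ is the 1-dimensional CW complex obtained by realizing each edge as a copy of $[0,1]$ glued at its endpoint vertices, with its usual (CW) topology. A diffeology on a set $X$ is a collection of maps $U\to X$ ("plots"), $U$ ranging over open subsets of all $\mathbb{R}^n$, containing all constant maps, closed under precomposition with smooth maps between open subsets of Euclidean spaces, and satisfying the sheaf condition (a map that is locally a plot is a plot). The diffeology generated by a set $\mathcal{A}$ of maps into $X$ is the smallest diffeology containing $\mathcal{A}$; its plots are the maps $f:V\to X$ such that $V$ has an open cover on each member of which $f$ is either constant or factors as $g\circ h$ with $g\in\mathcal{A}$ and $h$ smooth. The embedded wire diffeology $\mathcal{D}_T$ is the diffeology on $T$ generated by all maps $\gamma:\mathbb{R}\to T$ that are injective, continuous, and homeomorphisms onto their images. The D-topology of a diffeological space $X$ is the topology in which $S\subseteq X$ is open iff $P^{-1}(S)$ is open for every plot $P$ of $X$. *)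

theory Defs
  imports "HOL-Analysis.Analysis"
begin

text \<open>Points of T are encoded as pairs (v, s).  For a nonempty
word v over A and 0 < s <= 1, (v, s) is the point of the edge joining butlast v to v at
parameter s, measured from butlast v; (v, 1) is the vertex v itself.\<close>

definition Tcar :: "'a set \<Rightarrow> ('a list \<times> real) set" where
  "Tcar A = {([], 0)} \<union> {(v, s). v \<noteq> [] \<and> set v \<subseteq> A \<and> 0 < s \<and> s \<le> 1}"

definition vert :: "'a list \<Rightarrow> 'a list \<times> real" where
  "vert w = (if w = [] then ([], 0) else (w, 1))"

definition edge_map :: "'a list \<Rightarrow> real \<Rightarrow> 'a list \<times> real" where
  "edge_map v s = (if s = 0 then vert (butlast v) else (v, s))"

text \<open>The usual (CW / weak) topology: U is open iff its preimage under every
characteristic edge map is open in [0,1].\<close>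
definition Ttop :: "'a set \<Rightarrow> ('a list \<times> real) topology" where
  "Ttop A = topology (\<lambda>U. U \<subseteq> Tcar A \<and>
      (\<forall>v. v \<noteq> [] \<and> set v \<subseteq> A \<longrightarrow>
         openin (top_of_set {0..1}) {s \<in> {0..1}. edge_map v s \<in> U}))"

text \<open>R^n is encoded as the functions nat => real vanishing from index n on, with the
topology induced by the product topology (which is the Euclidean one).\<close>
definition Rn :: "nat \<Rightarrow> (nat \<Rightarrow> real) set" where
  "Rn n = {x. \<forall>i\<ge>n. x i = 0}"

definition pdiff :: "nat \<Rightarrow> ((nat \<Rightarrow> real) \<Rightarrow> real) \<Rightarrow> (nat \<Rightarrow> real) \<Rightarrow> real" where
  "pdiff i h x = deriv (\<lambda>t. h (x(i := x i + t))) 0"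

definition smooth_on :: "nat \<Rightarrow> (nat \<Rightarrow> real) set \<Rightarrow> ((nat \<Rightarrow> real) \<Rightarrow> real) \<Rightarrow> bool" where
  "smooth_on n U h \<longleftrightarrow>
     (\<forall>is. set is \<subseteq> {..<n} \<longrightarrow>
        continuous_on U (foldr pdiff is h) \<and>
        (\<forall>i<n. \<forall>x\<in>U. (\<lambda>t. foldr pdiff is h (x(i := x i + t))) differentiable (at 0)))"

definition embedded_wire :: "'a set \<Rightarrow> (real \<Rightarrow> 'a list \<times> real) \<Rightarrow> bool" where
  "embedded_wire A \<gamma> \<longleftrightarrow> inj \<gamma> \<and> continuous_map euclideanreal (Ttop A) \<gamma> \<and>
     homeomorphic_map euclideanreal (subtopology (Ttop A) (range \<gamma>)) \<gamma>"

text \<open>Plots of the diffeology generated by the embedded wires, with domain V open in R^n.\<close>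
definition wire_plot :: "'a set \<Rightarrow> nat \<Rightarrow> (nat \<Rightarrow> real) set \<Rightarrow> ((nat \<Rightarrow> real) \<Rightarrow> 'a list \<times> real) \<Rightarrow> bool" where
  "wire_plot A n V P \<longleftrightarrow> openin (top_of_set (Rn n)) V \<and> P ` V \<subseteq> Tcar A \<and>
     (\<forall>x\<in>V. \<exists>W. openin (top_of_set (Rn n)) W \<and> x \<in> W \<and> W \<subseteq> V \<and>
        ((\<exists>c. \<forall>y\<in>W. P y = c) \<or>
         (\<exists>\<gamma> h. embedded_wire A \<gamma> \<and> smooth_on n W h \<and> (\<forall>y\<in>W. P y = \<gamma> (h y)))))"

definition D_open :: "'a set \<Rightarrow> ('a list \<times> real) set \<Rightarrow> bool" where
  "D_open A S \<longleftrightarrow> S \<subseteq> Tcar A \<and>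
     (\<forall>n V P. wire_plot A n V P \<longrightarrow> openin (top_of_set (Rn n)) {x \<in> V. P x \<in> S})"

definition D_topology :: "'a set \<Rightarrow> ('a list \<times> real) topology" where
  "D_topology A = topology (D_open A)"

end

theory Submission
  imports Defs "HOL-Library.Sublist"
begin


lemma Ttop_istop: "istopology (\<lambda>U. U \<subseteq> Tcar A \<and>
      (\<forall>v. v \<noteq> [] \<and> set v \<subseteq> A \<longrightarrow>
         openin (top_of_set {0..1}) {s \<in> {0..1}. edge_map v s \<in> U}))"
  unfolding istopology_def
proof (rule conjI; intro allI impI)
  fix S T :: "('a list \<times> real) set"
  assume S: "S \<subseteq> Tcar A \<and> (\<forall>v. v \<noteq> [] \<and> set v \<subseteq> A \<longrightarrow>
         openin (top_of_set {0..1}) {s \<in> {0..1}. edge_map v s \<in> S})"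
    and T: "T \<subseteq> Tcar A \<and> (\<forall>v. v \<noteq> [] \<and> set v \<subseteq> A \<longrightarrow>
         openin (top_of_set {0..1}) {s \<in> {0..1}. edge_map v s \<in> T})"
  show "S \<inter> T \<subseteq> Tcar A \<and> (\<forall>v. v \<noteq> [] \<and> set v \<subseteq> A \<longrightarrow>
         openin (top_of_set {0..1}) {s \<in> {0..1}. edge_map v s \<in> S \<inter> T})"
  proof (intro conjI allI impI)
    show "S \<inter> T \<subseteq> Tcar A" using S by blast
    fix v :: "'a list" assume v: "v \<noteq> [] \<and> set v \<subseteq> A"
    have "{s \<in> {0..1}. edge_map v s \<in> S \<inter> T} = {s \<in> {0..1}. edge_map v s \<in> S} \<inter> {s \<in> {0..1}. edge_map v s \<in> T}"
      by blast
    then show "openin (top_of_set {0..1}) {s \<in> {0..1}. edge_map v s \<in> S \<inter> T}"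
      using S T v by (metis (no_types, lifting) openin_Int)
  qed
next
  fix K :: "('a list \<times> real) set set"
  assume K: "\<forall>S\<in>K. S \<subseteq> Tcar A \<and> (\<forall>v. v \<noteq> [] \<and> set v \<subseteq> A \<longrightarrow>
         openin (top_of_set {0..1}) {s \<in> {0..1}. edge_map v s \<in> S})"
  show "\<Union>K \<subseteq> Tcar A \<and> (\<forall>v. v \<noteq> [] \<and> set v \<subseteq> A \<longrightarrow>
         openin (top_of_set {0..1}) {s \<in> {0..1}. edge_map v s \<in> \<Union>K})"
  proof (intro conjI allI impI)
    show "\<Union>K \<subseteq> Tcar A" using K by blast
    fix v :: "'a list" assume v: "v \<noteq> [] \<and> set v \<subseteq> A"
    have "{s \<in> {0..1}. edge_map v s \<in> \<Union>K} = \<Union>((\<lambda>S. {s \<in> {0..1}. edge_map v s \<in> S}) ` K)"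
      by blast
    then show "openin (top_of_set {0..1}) {s \<in> {0..1}. edge_map v s \<in> \<Union>K}"
      using K v by (auto intro!: openin_Union)
  qed
qed

lemma openin_Ttop: "openin (Ttop A) U \<longleftrightarrow> U \<subseteq> Tcar A \<and>
      (\<forall>v. v \<noteq> [] \<and> set v \<subseteq> A \<longrightarrow>
         openin (top_of_set {0..1}) {s \<in> {0..1}. edge_map v s \<in> U})"
  unfolding Ttop_def using Ttop_istop[of A] by simp

lemma edge_map_in: "v \<noteq> [] \<Longrightarrow> set v \<subseteq> A \<Longrightarrow> 0 \<le> s \<Longrightarrow> s \<le> 1 \<Longrightarrow> edge_map v s \<in> Tcar A"
  unfolding edge_map_def vert_def Tcar_def
  by (auto dest: in_set_butlastD)

lemma topspace_Ttop: "topspace (Ttop A) = Tcar A"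
proof
  show "topspace (Ttop A) \<subseteq> Tcar A"
    unfolding topspace_def using openin_Ttop by blast
  have "openin (Ttop A) (Tcar A)"
    unfolding openin_Ttop
  proof (intro conjI allI impI)
    fix v :: "'a list" assume v: "v \<noteq> [] \<and> set v \<subseteq> A"
    have "{s \<in> {0..1}. edge_map v s \<in> Tcar A} = {0..1}" using edge_map_in v by auto
    then show "openin (top_of_set {0..1}) {s \<in> {0..1}. edge_map v s \<in> Tcar A}" by simp
  qed auto
  then show "Tcar A \<subseteq> topspace (Ttop A)" by (simp add: openin_subset)
qed

lemma D_istop: "istopology (D_open A)"
  unfolding istopology_def
proof (intro conjI allI impI)
  fix S T assume S: "D_open A S" and T: "D_open A T"
  show "D_open A (S \<inter> T)" unfolding D_open_def
  proof (intro conjI allI impI)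
    show "S \<inter> T \<subseteq> Tcar A" using S unfolding D_open_def by blast
    fix n V P assume P: "wire_plot A n V P"
    have "{x \<in> V. P x \<in> S \<inter> T} = {x \<in> V. P x \<in> S} \<inter> {x \<in> V. P x \<in> T}" by blast
    then show "openin (top_of_set (Rn n)) {x \<in> V. P x \<in> S \<inter> T}"
      using S T P unfolding D_open_def by (metis (no_types, lifting) openin_Int)
  qed
next
  fix K assume K: "\<forall>S\<in>K. D_open A S"
  show "D_open A (\<Union>K)" unfolding D_open_def
  proof (intro conjI allI impI)
    show "\<Union>K \<subseteq> Tcar A" using K unfolding D_open_def by blast
    fix n V P assume P: "wire_plot A n V P"
    have "{x \<in> V. P x \<in> \<Union>K} = \<Union>((\<lambda>S. {x \<in> V. P x \<in> S}) ` K)" by blast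
    then show "openin (top_of_set (Rn n)) {x \<in> V. P x \<in> \<Union>K}"
      using K P unfolding D_open_def by (auto intro!: openin_Union)
  qed
qed

lemma openin_D: "openin (D_topology A) S \<longleftrightarrow> D_open A S"
  unfolding D_topology_def using D_istop[of A] by simp

lemma edge_map_cont: "v \<noteq> [] \<Longrightarrow> set v \<subseteq> A \<Longrightarrow>
   continuous_map (top_of_set {0..1}) (Ttop A) (edge_map v)"
  unfolding continuous_map_def
  using edge_map_in by (auto simp: topspace_Ttop openin_Ttop)

lemma cont_from_Ttop:
  assumes "\<And>v. v \<noteq> [] \<Longrightarrow> set v \<subseteq> A \<Longrightarrow> continuous_on {0..1} (r \<circ> edge_map v)"
  shows "continuous_map (Ttop A) euclideanreal r"
  unfolding continuous_map_def
proof (intro conjI ballI allI impI)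
  fix U :: "real set" assume "openin euclideanreal U"
  then have U: "open U" by simp
  show "openin (Ttop A) {x \<in> topspace (Ttop A). r x \<in> U}"
    unfolding openin_Ttop topspace_Ttop
  proof (intro conjI allI impI)
    fix v :: "'a list" assume v: "v \<noteq> [] \<and> set v \<subseteq> A"
    have "{s \<in> {0..1}. edge_map v s \<in> {x \<in> Tcar A. r x \<in> U}} = {0..1} \<inter> (r \<circ> edge_map v) -` U"
      using edge_map_in v by auto
    then show "openin (top_of_set {0..1}) {s \<in> {0..1}. edge_map v s \<in> {x \<in> Tcar A. r x \<in> U}}"
      using continuous_openin_preimage_gen[OF assms U] v by simp
  qed auto
qed auto



definition sig :: "real \<Rightarrow> real" where "sig t = t / (1 + \<bar>t\<bar>)"
definition tau :: "real \<Rightarrow> real" where "tau u = u / (1 - \<bar>u\<bar>)"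

lemma sig_bound: "\<bar>sig t\<bar> < 1"
proof -
  have d: "1 + \<bar>t\<bar> > 0" by (simp add: add_pos_nonneg)
  have "\<bar>sig t\<bar> = \<bar>t\<bar> / (1 + \<bar>t\<bar>)" unfolding sig_def using d by (simp add: abs_divide)
  also have "\<dots> < 1" using d by (simp add: divide_less_eq)
  finally show ?thesis .
qed

lemma sig_tau: assumes "\<bar>u\<bar> < 1" shows "sig (tau u) = u"
proof -
  have d: "1 - \<bar>u\<bar> > 0" using assms by simp
  have a: "\<bar>tau u\<bar> = \<bar>u\<bar> / (1 - \<bar>u\<bar>)" unfolding tau_def using d by (simp add: abs_divide)
  have "1 + \<bar>tau u\<bar> = 1 / (1 - \<bar>u\<bar>)" unfolding a using d by (simp add: field_simps)
  then have "sig (tau u) = tau u * (1 - \<bar>u\<bar>)" unfolding sig_def by simp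
  also have "\<dots> = u" unfolding tau_def using d by simp
  finally show ?thesis .
qed

lemma tau_sig: "tau (sig t) = t"
proof -
  have d: "1 + \<bar>t\<bar> > 0" by (simp add: add_pos_nonneg)
  have a: "\<bar>sig t\<bar> = \<bar>t\<bar> / (1 + \<bar>t\<bar>)" unfolding sig_def using d by (simp add: abs_divide)
  have "1 - \<bar>sig t\<bar> = 1 / (1 + \<bar>t\<bar>)" unfolding a using d by (simp add: field_simps)
  then have "tau (sig t) = sig t * (1 + \<bar>t\<bar>)" unfolding tau_def by simp
  also have "\<dots> = t" unfolding sig_def using d by simp
  finally show ?thesis .
qed

lemma sig_le0: "sig t \<le> 0 \<longleftrightarrow> t \<le> 0"
  proof -
  have "1 + \<bar>t\<bar> > 0" by (simp add: add_pos_nonneg)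
  then show ?thesis unfolding sig_def by (simp add: divide_le_0_iff)
qed

lemma sig_0 [simp]: "sig 0 = 0" unfolding sig_def by simp

lemma tau_le0: "\<bar>u\<bar> < 1 \<Longrightarrow> tau u \<le> 0 \<longleftrightarrow> u \<le> 0"
  unfolding tau_def by (auto simp: divide_le_0_iff)

lemma tau_0 [simp]: "tau 0 = 0" unfolding tau_def by simp

lemma sig_cont: "continuous_on S sig"
  unfolding sig_def by (intro continuous_intros) (auto simp: add_pos_nonneg)

lemma tau_cont: "continuous_on {-1<..<1} tau"
  unfolding tau_def by (intro continuous_intros) auto

lemma sig_inj: "sig x = sig y \<Longrightarrow> x = y"
  by (metis tau_sig)

lemma embedded_from_retraction:
  assumes g: "continuous_map euclideanreal (Ttop A) \<gamma>"
    and r: "continuous_map (Ttop A) euclideanreal r"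
    and rg: "\<And>t. r (\<gamma> t) = sig t"
  shows "embedded_wire A \<gamma>"
  unfolding embedded_wire_def
proof (intro conjI)
  show "inj \<gamma>" by (rule injI) (metis rg sig_inj)
  show "continuous_map euclideanreal (Ttop A) \<gamma>" by fact
  show "homeomorphic_map euclideanreal (subtopology (Ttop A) (range \<gamma>)) \<gamma>"
    unfolding homeomorphic_map_maps
  proof (rule exI[of _ "\<lambda>y. tau (r y)"], unfold homeomorphic_maps_def, intro conjI ballI)
    show "continuous_map euclideanreal (subtopology (Ttop A) (range \<gamma>)) \<gamma>"
      using g by (simp add: continuous_map_into_subtopology)
    have r1: "continuous_map (subtopology (Ttop A) (range \<gamma>)) (top_of_set {-1<..<1}) r"
    proof (rule continuous_map_into_subtopology)
      show "continuous_map (subtopology (Ttop A) (range \<gamma>)) euclideanreal r"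
        using r by (simp add: continuous_map_from_subtopology)
      show "r \<in> topspace (subtopology (Ttop A) (range \<gamma>)) \<rightarrow> {-1<..<1}"
        using sig_bound rg by (auto simp: abs_less_iff)
    qed
    have t1: "continuous_map (top_of_set {-1<..<1}) euclideanreal tau"
      using tau_cont by (simp add: continuous_map_iff_continuous)
    show "continuous_map (subtopology (Ttop A) (range \<gamma>)) euclideanreal (\<lambda>y. tau (r y))"
      using continuous_map_compose[OF r1 t1] by (simp add: o_def)
    fix x assume "x \<in> topspace (euclideanreal::real topology)"
    show "tau (r (\<gamma> x)) = x" by (simp add: rg tau_sig)
  next
    fix y assume "y \<in> topspace (subtopology (Ttop A) (range \<gamma>))"
    then obtain t where "y = \<gamma> t" by auto
    then show "\<gamma> (tau (r y)) = y" by (simp add: rg tau_sig)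
  qed
qed



definition r1 :: "'a list \<Rightarrow> 'a \<Rightarrow> 'a list \<times> real \<Rightarrow> real" where
  "r1 w a = (\<lambda>(u,s). if u = w then s - 1 else if u = w@[a] then s else
      if prefix (w@[a]) u then 1 else if prefix w u then 0 else -1)"

definition r2 :: "'a \<Rightarrow> 'a \<Rightarrow> 'a list \<times> real \<Rightarrow> real" where
  "r2 a b = (\<lambda>(u,s). if u = [a] then s else if u = [b] then - s else
      if prefix [a] u then 1 else if prefix [b] u then -1 else 0)"

lemma prefix_butlast_strict: "prefix x u \<Longrightarrow> u \<noteq> x \<Longrightarrow> prefix x (butlast u)"
proof -
  assume a: "prefix x u" "u \<noteq> x"
  then obtain z where z: "u = x @ z" by (auto simp: prefix_def)
  then have "z \<noteq> []" using a by auto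
  then have "butlast u = x @ butlast z" using z by (simp add: butlast_append)
  then show ?thesis by (simp add: prefix_def)
qed

lemma pb1: "prefix x (butlast u) \<Longrightarrow> prefix x u"
  using prefixeq_butlast[of u] prefix_order.trans by blast

lemma pb2: "butlast u = x \<Longrightarrow> prefix x u"
  using prefixeq_butlast by blast

lemma r1_vert: assumes u0: "u \<noteq> []" and w0: "w \<noteq> []"
  shows "r1 w a (vert (butlast u)) = r1 w a (u, 0)"
proof (cases "butlast u = []")
  case True
  then obtain c where u: "u = [c]" using assms(1)
    by (metis append_butlast_last_id append_Nil)
  have L: "\<And>x y. prefix x y \<Longrightarrow> length x \<le> length y" by (rule prefix_length_le)
  have lw: "length w \<ge> 1" using w0 by (cases w) auto
  have h1: "\<not> prefix (w@[a]) u" using L[of "w@[a]" u] lw u by auto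
  have h2: "u \<noteq> w@[a]" using lw u by auto
  have h3: "prefix w u \<Longrightarrow> u = w" using L[of w u] lw u w0
    by (metis Nil_prefix prefix_Cons prefix_order.antisym_conv)
  have h4: "\<not> prefix (w@[a]) []" "\<not> prefix w []" "[] \<noteq> w" "[] \<noteq> w@[a]" using w0 by auto
  show ?thesis using True h1 h2 h3 h4 unfolding r1_def vert_def by auto
next
  case False
  define bu where "bu = butlast u"
  have bl: "vert (butlast u) = (bu, 1)" using False by (simp add: vert_def bu_def)
  have lbu: "length bu = length u - 1" by (simp add: bu_def)
  have P1: "\<And>x. prefix x bu \<Longrightarrow> prefix x u" unfolding bu_def by (rule pb1)
  have P2: "\<And>x. bu = x \<Longrightarrow> prefix x u" unfolding bu_def by (rule pb2)
  have P3: "\<And>x. u \<noteq> x \<Longrightarrow> prefix x u \<Longrightarrow> prefix x bu" unfolding bu_def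
    by (rule prefix_butlast_strict)
  have L: "\<And>x y. prefix x y \<Longrightarrow> length x \<le> length y" by (rule prefix_length_le)
  show ?thesis unfolding bl
  proof (cases "u = w")
    case True
    have lt: "length bu < length w" using lbu True w0 by simp
    then have "bu \<noteq> w" "bu \<noteq> w@[a]" by auto
    moreover have "\<not> prefix (w@[a]) bu" "\<not> prefix w bu" using lt L by fastforce+
    ultimately have "bu \<noteq> w" "bu \<noteq> w@[a]" "\<not> prefix (w@[a]) bu" "\<not> prefix w bu" by blast+
    then show "r1 w a (bu, 1) = r1 w a (u, 0)" using True unfolding r1_def by simp
  next
    case uw: False
    show "r1 w a (bu, 1) = r1 w a (u, 0)"
    proof (cases "u = w@[a]")
      case True
      then have "bu = w" unfolding bu_def by simp
      then show ?thesis using True unfolding r1_def by simp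
    next
      case uwa: False
      show ?thesis
      proof (cases "prefix (w@[a]) u")
        case True
        then have "prefix (w@[a]) bu" using P3 uwa by blast
        moreover have "bu \<noteq> w" using L[OF \<open>prefix (w@[a]) bu\<close>] by auto
        ultimately show ?thesis using True uw uwa unfolding r1_def by simp
      next
        case nwa: False
        have "bu \<noteq> w@[a]" "\<not> prefix (w@[a]) bu" using P1 P2 nwa by blast+
        show ?thesis
        proof (cases "prefix w u")
          case True
          then have "prefix w bu" using P3 uw by blast
          then show ?thesis using True uw uwa nwa \<open>bu \<noteq> w@[a]\<close> \<open>\<not> prefix (w@[a]) bu\<close>
            unfolding r1_def by simp
        next
          case False
          then have "bu \<noteq> w" "\<not> prefix w bu" using P1 P2 by blast+
          then show ?thesis using False uw uwa nwa \<open>bu \<noteq> w@[a]\<close> \<open>\<not> prefix (w@[a]) bu\<close>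
            unfolding r1_def by simp
        qed
      qed
    qed
  qed
qed

lemma prefix_single: "x \<noteq> [] \<Longrightarrow> prefix [a] x \<longleftrightarrow> hd x = a"
  by (cases x) auto

lemma r2_vert: assumes u0: "u \<noteq> []" and ab: "a \<noteq> b"
  shows "r2 a b (vert (butlast u)) = r2 a b (u, 0)"
proof (cases "butlast u = []")
  case True
  then obtain c where u: "u = [c]" using assms(1)
    by (metis append_butlast_last_id append_Nil)
  show ?thesis using u unfolding r2_def vert_def by auto
next
  case False
  define bu where "bu = butlast u"
  have bl: "vert (butlast u) = (bu, 1)" using False by (simp add: vert_def bu_def)
  have bu0: "bu \<noteq> []" using False bu_def by simp
  have hd: "hd bu = hd u" unfolding bu_def using False
    by (metis append_butlast_last_id hd_append2 u0)
  have "length (butlast u) > 0" using False by blast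
  then have "length u - 1 > 0" by (simp only: length_butlast)
  then have lu: "length u \<ge> 2" by arith
  have nu: "u \<noteq> [a]" "u \<noteq> [b]" using lu by auto
  show ?thesis unfolding bl r2_def using nu bu0 u0 hd ab
    by (auto simp: prefix_single)
qed

definition arc1 :: "'a list \<Rightarrow> 'a \<Rightarrow> real \<Rightarrow> 'a list \<times> real" where
  "arc1 w a t = (if t \<le> 0 then edge_map w (1 + sig t) else edge_map (w@[a]) (sig t))"

definition arc2 :: "'a \<Rightarrow> 'a \<Rightarrow> real \<Rightarrow> 'a list \<times> real" where
  "arc2 a b t = (if t \<le> 0 then edge_map [b] (- sig t) else edge_map [a] (sig t))"

lemma cm_piece:
  fixes f :: "real \<Rightarrow> real"
  assumes "continuous_on UNIV f" "\<And>t. t \<in> S \<Longrightarrow> f t \<in> {0..1}"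
  shows "continuous_map (subtopology euclideanreal S) (top_of_set {0..1}) f"
proof (rule continuous_map_into_subtopology)
  show "continuous_map (subtopology euclideanreal S) euclideanreal f"
    using continuous_on_subset[OF assms(1) subset_UNIV] by simp
  show "f \<in> topspace (subtopology euclideanreal S) \<rightarrow> {0..1}" using assms(2) by auto
qed

lemma arc_cont_gen:
  assumes v1: "v1 \<noteq> []" "set v1 \<subseteq> A" and v2: "v2 \<noteq> []" "set v2 \<subseteq> A"
    and f: "continuous_on UNIV f" "\<And>t. t \<le> 0 \<Longrightarrow> f t \<in> {0..1}"
    and g: "continuous_on UNIV g" "\<And>t. 0 \<le> t \<Longrightarrow> g t \<in> {0..1}"
    and fg: "edge_map v1 (f 0) = edge_map v2 (g 0)"
  shows "continuous_map euclideanreal (Ttop A)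
           (\<lambda>t. if t \<le> 0 then edge_map v1 (f t) else edge_map v2 (g t))"
proof (rule continuous_map_cases_le[where p = "\<lambda>t. t" and q = "\<lambda>t. 0"])
  show "continuous_map (subtopology euclideanreal {x \<in> topspace euclideanreal. x \<le> 0}) (Ttop A) (\<lambda>t. edge_map v1 (f t))"
    using continuous_map_compose[OF cm_piece[OF f(1), of "{x \<in> topspace euclideanreal. x \<le> 0}"] edge_map_cont[OF v1]] f(2)
    by (simp add: o_def)
  show "continuous_map (subtopology euclideanreal {x \<in> topspace euclideanreal. 0 \<le> x}) (Ttop A) (\<lambda>t. edge_map v2 (g t))"
    using continuous_map_compose[OF cm_piece[OF g(1), of "{x \<in> topspace euclideanreal. 0 \<le> x}"] edge_map_cont[OF v2]] g(2)
    by (simp add: o_def)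
  show "\<And>x. x \<in> topspace euclideanreal \<Longrightarrow> x = 0 \<Longrightarrow> edge_map v1 (f x) = edge_map v2 (g x)" using fg by simp
qed auto

lemma sig_le1: "sig t \<le> 1" "-1 \<le> sig t" "sig t < 1" "-1 < sig t"
  using sig_bound[of t] by auto

lemma arc1_cont: assumes "w \<noteq> []" "set w \<subseteq> A" "a \<in> A"
  shows "continuous_map euclideanreal (Ttop A) (arc1 w a)"
proof -
  have "continuous_map euclideanreal (Ttop A)
           (\<lambda>t. if t \<le> 0 then edge_map w (1 + sig t) else edge_map (w@[a]) (sig t))"
  proof (rule arc_cont_gen)
    show "continuous_on UNIV (\<lambda>t. 1 + sig t)" using sig_cont by (intro continuous_intros)
    show "continuous_on UNIV sig" by (rule sig_cont)
    show "1 + sig t \<in> {0..1}" if "t \<le> 0" for t using that sig_le0 sig_le1[of t] by auto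
    show "sig t \<in> {0..1}" if "0 \<le> t" for t using that sig_le0[of t] sig_le1[of t]
      by (cases "t = 0") auto
    show "edge_map w (1 + sig 0) = edge_map (w @ [a]) (sig 0)"
      using assms(1) by (simp add: edge_map_def vert_def)
  qed (use assms in auto)
  then show ?thesis unfolding arc1_def[abs_def] .
qed

lemma arc2_cont: assumes "a \<in> A" "b \<in> A"
  shows "continuous_map euclideanreal (Ttop A) (arc2 a b)"
proof -
  have "continuous_map euclideanreal (Ttop A)
           (\<lambda>t. if t \<le> 0 then edge_map [b] (- sig t) else edge_map [a] (sig t))"
  proof (rule arc_cont_gen)
    show "continuous_on UNIV (\<lambda>t. - sig t)" using sig_cont by (intro continuous_intros)
    show "continuous_on UNIV sig" by (rule sig_cont)
    show "- sig t \<in> {0..1}" if "t \<le> 0" for t using that sig_le0 sig_le1[of t] by auto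
    show "sig t \<in> {0..1}" if "0 \<le> t" for t using that sig_le0[of t] sig_le1[of t]
      by (cases "t = 0") auto
    show "edge_map [b] (- sig 0) = edge_map [a] (sig 0)"
      by (simp add: edge_map_def vert_def)
  qed (use assms in auto)
  then show ?thesis unfolding arc2_def[abs_def] .
qed

lemma r1_cont: assumes "w \<noteq> []"
  shows "continuous_map (Ttop A) euclideanreal (r1 w a)"
proof (rule cont_from_Ttop)
  fix v :: "'a list" assume v: "v \<noteq> []" "set v \<subseteq> A"
  have "r1 w a \<circ> edge_map v = (\<lambda>s. r1 w a (v, s))"
    using r1_vert[OF v(1) assms] by (auto simp: edge_map_def)
  moreover have "continuous_on {0..1} (\<lambda>s. r1 w a (v, s))"
    unfolding r1_def by (cases "v = w"; cases "v = w@[a]"; cases "prefix (w@[a]) v"; cases "prefix w v")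
      (auto intro!: continuous_intros)
  ultimately show "continuous_on {0..1} (r1 w a \<circ> edge_map v)" by simp
qed

lemma r2_cont: assumes "a \<noteq> b"
  shows "continuous_map (Ttop A) euclideanreal (r2 a b)"
proof (rule cont_from_Ttop)
  fix v :: "'a list" assume v: "v \<noteq> []" "set v \<subseteq> A"
  have "r2 a b \<circ> edge_map v = (\<lambda>s. r2 a b (v, s))"
    using r2_vert[OF v(1) assms] by (auto simp: edge_map_def)
  moreover have "continuous_on {0..1} (\<lambda>s. r2 a b (v, s))"
    unfolding r2_def by (cases "v = [a]"; cases "v = [b]"; cases "prefix [a] v"; cases "prefix [b] v")
      (auto intro!: continuous_intros)
  ultimately show "continuous_on {0..1} (r2 a b \<circ> edge_map v)" by simp
qed

lemma r1_arc: assumes "w \<noteq> []" shows "r1 w a (arc1 w a t) = sig t"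
proof (cases "t \<le> 0")
  case True
  then have "1 + sig t \<noteq> 0" using sig_le1[of t] by auto
  then show ?thesis using True unfolding arc1_def edge_map_def r1_def by simp
next
  case False
  then have "sig t \<noteq> 0" "sig t > 0" using sig_le0[of t] by auto
  then show ?thesis using False unfolding arc1_def edge_map_def r1_def by simp
qed

lemma r2_arc: assumes "a \<noteq> b" shows "r2 a b (arc2 a b t) = sig t"
proof (cases "t \<le> 0")
  case True
  show ?thesis
  proof (cases "t = 0")
    case True then show ?thesis unfolding arc2_def edge_map_def r2_def vert_def by simp
  next
    case False
    then have "sig t \<noteq> 0" using sig_le0[of t] True tau_sig by (metis tau_0)
    then show ?thesis using True assms unfolding arc2_def edge_map_def r2_def by simp
  qed
next
  case False
  then have "sig t \<noteq> 0" using sig_le0[of t] by auto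
  then show ?thesis using False assms unfolding arc2_def edge_map_def r2_def by simp
qed

lemma arc1_wire: "w \<noteq> [] \<Longrightarrow> set w \<subseteq> A \<Longrightarrow> a \<in> A \<Longrightarrow> embedded_wire A (arc1 w a)"
  by (rule embedded_from_retraction[OF arc1_cont r1_cont r1_arc])

lemma arc2_wire: "a \<in> A \<Longrightarrow> b \<in> A \<Longrightarrow> a \<noteq> b \<Longrightarrow> embedded_wire A (arc2 a b)"
  by (rule embedded_from_retraction[OF arc2_cont r2_cont r2_arc])



lemma pdiff_id0: "pdiff 0 (\<lambda>x. x 0) = (\<lambda>x. 1)"
proof
  fix x :: "nat \<Rightarrow> real"
  have "((\<lambda>t. x 0 + t) has_real_derivative 1) (at 0)"
    by (auto intro!: derivative_eq_intros)
  then show "pdiff 0 (\<lambda>x. x 0) x = 1" unfolding pdiff_def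
    by (simp add: DERIV_imp_deriv)
qed

lemma pdiff_const: "pdiff i (\<lambda>x. c) = (\<lambda>x. 0)"
  unfolding pdiff_def by simp

lemma foldr_pdiff_cases:
  "set js \<subseteq> {..<1} \<Longrightarrow> foldr pdiff js (\<lambda>x. x 0) \<in> {\<lambda>x. x 0, \<lambda>x. 1, \<lambda>x. 0}"
proof (induction js)
  case Nil then show ?case by simp
next
  case (Cons i js)
  then have i: "i = 0" by auto
  from Cons have IH: "foldr pdiff js (\<lambda>x. x 0) \<in> {\<lambda>x. x 0, \<lambda>x. 1, \<lambda>x. 0}" by simp
  then show ?case using i by (auto simp: pdiff_id0 pdiff_const)
qed

lemma smooth_proj: "smooth_on 1 W (\<lambda>x. x 0)"
  unfolding smooth_on_def
proof (intro allI impI conjI ballI)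
  fix js :: "nat list" assume "set js \<subseteq> {..<1}"
  then have F: "foldr pdiff js (\<lambda>x. x 0) \<in> {\<lambda>x. x 0, \<lambda>x. 1, \<lambda>x. 0}" by (rule foldr_pdiff_cases)
  show "continuous_on W (foldr pdiff js (\<lambda>x. x 0))"
    using F continuous_on_subset[OF continuous_on_product_coordinates[of 0] subset_UNIV]
    by auto
  fix i x assume i: "i < (1::nat)" and "x \<in> W"
  then have i0: "i = 0" by simp
  show "(\<lambda>t. foldr pdiff js (\<lambda>x. x 0) (x(i := x i + t))) differentiable at 0"
    using F i0 by (auto intro!: derivative_intros)
qed

lemma wire_preimage_open:
  assumes S: "D_open A S" and g: "embedded_wire A \<gamma>"
  shows "open {t. \<gamma> t \<in> S}"
proof -
  have gc: "continuous_map euclideanreal (Ttop A) \<gamma>" using g unfolding embedded_wire_def by blast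
  have gT: "\<gamma> t \<in> Tcar A" for t
    using gc unfolding continuous_map_def topspace_Ttop by auto
  have wp: "wire_plot A 1 (Rn 1) (\<lambda>x. \<gamma> (x 0))"
    unfolding wire_plot_def
  proof (intro conjI ballI)
    show "openin (top_of_set (Rn 1)) (Rn 1)" by simp
    show "(\<lambda>x. \<gamma> (x 0)) ` Rn 1 \<subseteq> Tcar A" using gT by auto
    fix x assume "x \<in> Rn 1"
    then show "\<exists>W. openin (top_of_set (Rn 1)) W \<and> x \<in> W \<and> W \<subseteq> Rn 1 \<and>
             ((\<exists>c. \<forall>y\<in>W. \<gamma> (y 0) = c) \<or>
              (\<exists>\<gamma>' h. embedded_wire A \<gamma>' \<and> smooth_on 1 W h \<and> (\<forall>y\<in>W. \<gamma> (y 0) = \<gamma>' (h y))))"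
      using g smooth_proj[of "Rn 1"]
      by (intro exI[of _ "Rn 1"] conjI disjI2 exI[of _ \<gamma>] exI[of _ "\<lambda>x. x 0"]) auto
  qed
  then have "openin (top_of_set (Rn 1)) {x \<in> Rn 1. \<gamma> (x 0) \<in> S}"
    using S unfolding D_open_def by blast
  then obtain Ob where Ob: "open Ob" "{x \<in> Rn 1. \<gamma> (x 0) \<in> S} = Rn 1 \<inter> Ob"
    by (auto simp: openin_open)
  define e :: "real \<Rightarrow> nat \<Rightarrow> real" where "e t = (\<lambda>i. if i = 0 then t else 0)" for t
  have eR: "e t \<in> Rn 1" for t unfolding e_def Rn_def by auto
  have e0: "e t 0 = t" for t unfolding e_def by simp
  have ec: "continuous_on UNIV e"
  proof (rule continuous_on_coordinatewise_then_product)
    fix i show "continuous_on UNIV (\<lambda>t. e t i)" unfolding e_def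
      by (cases "i = 0") (auto intro: continuous_intros)
  qed
  have "{t. \<gamma> t \<in> S} = e -` Ob \<inter> UNIV"
  proof (intro set_eqI iffI)
    fix t assume "t \<in> {t. \<gamma> t \<in> S}"
    then have "e t \<in> {x \<in> Rn 1. \<gamma> (x 0) \<in> S}" using eR e0 by simp
    then show "t \<in> e -` Ob \<inter> UNIV" using Ob(2) by auto
  next
    fix t assume "t \<in> e -` Ob \<inter> UNIV"
    then have "e t \<in> Rn 1 \<inter> Ob" using eR by auto
    then have "e t \<in> {x \<in> Rn 1. \<gamma> (x 0) \<in> S}" using Ob(2) by simp
    then show "t \<in> {t. \<gamma> t \<in> S}" using e0 by simp
  qed
  then show ?thesis using ec Ob(1) continuous_on_open_vimage[of UNIV e] by simp
qed

lemma Ttop_imp_D: assumes U: "openin (Ttop A) U" shows "D_open A U"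
  unfolding D_open_def
proof (intro conjI allI impI)
  show "U \<subseteq> Tcar A" using U openin_Ttop by blast
  fix n V P assume P: "wire_plot A n V P"
  show "openin (top_of_set (Rn n)) {x \<in> V. P x \<in> U}"
  proof (subst openin_subopen, intro ballI)
    fix x assume x: "x \<in> {x \<in> V. P x \<in> U}"
    then obtain W where W: "openin (top_of_set (Rn n)) W" "x \<in> W" "W \<subseteq> V"
      "(\<exists>c. \<forall>y\<in>W. P y = c) \<or> (\<exists>\<gamma> h. embedded_wire A \<gamma> \<and> smooth_on n W h \<and> (\<forall>y\<in>W. P y = \<gamma> (h y)))"
      using P unfolding wire_plot_def by blast
    show "\<exists>T. openin (top_of_set (Rn n)) T \<and> x \<in> T \<and> T \<subseteq> {x \<in> V. P x \<in> U}"
    proof (cases "\<exists>c. \<forall>y\<in>W. P y = c")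
      case True
      then obtain c where c: "\<forall>y\<in>W. P y = c" by blast
      then have "W \<subseteq> {x \<in> V. P x \<in> U}" using x W by auto
      then show ?thesis using W by blast
    next
      case False
      then obtain \<gamma> h where gh: "embedded_wire A \<gamma>" "smooth_on n W h" "\<forall>y\<in>W. P y = \<gamma> (h y)"
        using W(4) by blast
      have hc: "continuous_on W h" using gh(2) unfolding smooth_on_def
        by (metis empty_subsetI foldr_Nil id_apply list.set(1))
      have gc: "continuous_map euclideanreal (Ttop A) \<gamma>" using gh(1) unfolding embedded_wire_def by blast
      have Oo: "open {t. \<gamma> t \<in> U}"
        using openin_continuous_map_preimage[OF gc U] by simp
      have "openin (top_of_set W) (W \<inter> h -` {t. \<gamma> t \<in> U})"
        by (rule continuous_openin_preimage_gen[OF hc Oo])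
      then have T: "openin (top_of_set (Rn n)) (W \<inter> h -` {t. \<gamma> t \<in> U})"
        using W(1) openin_trans by blast
      show ?thesis
        by (rule exI[of _ "W \<inter> h -` {t. \<gamma> t \<in> U}"]) (use T x W gh(3) in auto)
    qed
  qed
qed

lemma loc_open:
  assumes S: "D_open A S" and g: "embedded_wire A \<gamma>" and G0: "open G0" and phi: "continuous_on G0 \<phi>"
    and s0: "s0 \<in> G0" "s0 \<in> {0..1}" "edge_map v s0 \<in> S"
    and eq: "\<And>s. s \<in> {0..1} \<Longrightarrow> s \<in> G0 \<Longrightarrow> \<gamma> (\<phi> s) = edge_map v s"
  shows "\<exists>T. openin (top_of_set {0..1}) T \<and> s0 \<in> T \<and> T \<subseteq> {s \<in> {0..1}. edge_map v s \<in> S}"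
proof -
  have Ob: "open {t. \<gamma> t \<in> S}" by (rule wire_preimage_open[OF S g])
  have G: "open (\<phi> -` {t. \<gamma> t \<in> S} \<inter> G0)"
    using continuous_on_open_vimage[OF G0] phi Ob by blast
  show ?thesis
    by (rule exI[of _ "{0..1} \<inter> (\<phi> -` {t. \<gamma> t \<in> S} \<inter> G0)"])
      (use G s0 eq in \<open>auto intro: openin_open_Int\<close>)
qed

lemma k1: "0 < s \<Longrightarrow> s \<le> 1 \<Longrightarrow> arc1 v a (tau (s - 1)) = edge_map v s"
proof -
  assume s: "0 < s" "s \<le> 1"
  then have a: "\<bar>s - 1\<bar> < 1" by auto
  then have "tau (s - 1) \<le> 0" using tau_le0 s by auto
  then show ?thesis unfolding arc1_def using sig_tau[OF a] by simp
qed

lemma k2: "butlast v \<noteq> [] \<Longrightarrow> 0 \<le> s \<Longrightarrow> s < 1 \<Longrightarrow> arc1 (butlast v) (last v) (tau s) = edge_map v s"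
proof -
  assume b: "butlast v \<noteq> []" and s: "0 \<le> s" "s < 1"
  then have v: "v \<noteq> []" by auto
  show ?thesis
  proof (cases "s = 0")
    case True then show ?thesis using b unfolding arc1_def by (simp add: edge_map_def vert_def)
  next
    case False
    then have a: "\<bar>s\<bar> < 1" and sp: "0 < s" using s by auto
    then have "\<not> tau s \<le> 0" using tau_le0[OF a] by auto
    then show ?thesis unfolding arc1_def using sig_tau[OF a] v by simp
  qed
qed

lemma k3: "0 \<le> s \<Longrightarrow> s < 1 \<Longrightarrow> arc2 c b (tau s) = edge_map [c] s"
proof -
  assume s: "0 \<le> s" "s < 1"
  show ?thesis
  proof (cases "s = 0")
    case True then show ?thesis unfolding arc2_def by (simp add: edge_map_def vert_def)
  next
    case False
    then have a: "\<bar>s\<bar> < 1" and sp: "0 < s" using s by auto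
    then have "\<not> tau s \<le> 0" using tau_le0[OF a] by auto
    then show ?thesis unfolding arc2_def using sig_tau[OF a] by simp
  qed
qed

lemma tau1_cont: "continuous_on {0<..<2} (\<lambda>s. tau (s - 1))"
proof -
  have "continuous_on {0<..<2} (\<lambda>s::real. s - 1)" by (intro continuous_intros)
  moreover have "(\<lambda>s::real. s - 1) ` {0<..<2} \<subseteq> {-1<..<1}" by auto
  ultimately show ?thesis using continuous_on_compose2[OF tau_cont] by blast
qed

lemma D_imp_Ttop:
  assumes A: "finite A" "card A \<ge> 2" and S: "D_open A S"
  shows "openin (Ttop A) S"
  unfolding openin_Ttop
proof (intro conjI allI impI)
  show "S \<subseteq> Tcar A" using S unfolding D_open_def by blast
  have other: "\<exists>b\<in>A. b \<noteq> a" if "a \<in> A" for a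
  proof (rule ccontr)
    assume "\<not> (\<exists>b\<in>A. b \<noteq> a)"
    then have "A = {a}" using that by blast
    then show False using A by simp
  qed
  have ne: "A \<noteq> {}" using A by auto
  fix v :: "'a list" assume v: "v \<noteq> [] \<and> set v \<subseteq> A"
  show "openin (top_of_set {0..1}) {s \<in> {0..1}. edge_map v s \<in> S}"
  proof (subst openin_subopen, intro ballI)
    fix s0 assume s0: "s0 \<in> {s \<in> {0..1}. edge_map v s \<in> S}"
    show "\<exists>T. openin (top_of_set {0..1}) T \<and> s0 \<in> T \<and> T \<subseteq> {s \<in> {0..1}. edge_map v s \<in> S}"
    proof (cases "s0 > 0")
      case True
      obtain a where a: "a \<in> A" using ne by blast
      show ?thesis
      proof (rule loc_open[OF S arc1_wire[of v A a] _ tau1_cont])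
        show "s0 \<in> {0<..<2}" using True s0 by auto
        show "\<And>s. s \<in> {0..1} \<Longrightarrow> s \<in> {0<..<2} \<Longrightarrow> arc1 v a (tau (s - 1)) = edge_map v s"
          using k1 by auto
      qed (use s0 v a in auto)
    next
      case False
      then have z: "s0 = 0" using s0 by auto
      show ?thesis
      proof (cases "butlast v = []")
        case False
        have lv: "last v \<in> A" using v by auto
        have bv: "set (butlast v) \<subseteq> A" using v by (meson in_set_butlastD subset_iff)
        show ?thesis
        proof (rule loc_open[OF S arc1_wire[of "butlast v" A "last v"] _ tau_cont])
          show "\<And>s. s \<in> {0..1} \<Longrightarrow> s \<in> {-1<..<1} \<Longrightarrow> arc1 (butlast v) (last v) (tau s) = edge_map v s"
            using k2[OF False] by auto
        qed (use s0 z False lv bv in auto)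
      next
        case True
        then obtain c where c: "v = [c]" using v by (metis append_butlast_last_id append_Nil)
        then have cA: "c \<in> A" using v by auto
        then obtain b where b: "b \<in> A" "b \<noteq> c" using other by blast
        show ?thesis
        proof (rule loc_open[OF S arc2_wire[of c A b] _ tau_cont])
          show "\<And>s. s \<in> {0..1} \<Longrightarrow> s \<in> {-1<..<1} \<Longrightarrow> arc2 c b (tau s) = edge_map v s"
            using k3 c by auto
        qed (use s0 z cA b in auto)
      qed
    qed
  qed
qed

theorem mainTheorem1:
  fixes A :: "'a set"
  assumes "finite A" and "card A \<ge> 2"
  shows "D_topology A = Ttop A"
  unfolding topology_eq openin_D
  using Ttop_imp_D D_imp_Ttop[OF assms] by blast

end
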